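(* Let $n\ge3$. Let $\mathcal M=(G,In,Out,Leak)$ be a linear compartmental model with $n-1$ compartments such that $In=Out=\{1\}$ and $Leak=\emptyset$. Let $H$ be the graph obtained from $G$ by adding a leaf edge at compartment $1$ (new compartment $n$, edges $1\to n$ with parameter $a_{n1}$ and $n\to1$ with parameter $a_{1n}$), and let $\mathcal M'=(H,In',Out',Leak')$ be a linear compartmental model with $Leak'=\emptyset$. Let $A$ and $A^*$ denote the compartmental matrices of $\mathcal M$ and $\mathcal M'$. Then: (1) $\det(\lambda I-A^* )=\lambda\det(\lambda I-A)+a_{1n}\det(\lambda I-A)+a_{n1}\lambda\det\big((\lambda I-A)^{1,1}\big)$; (2) $\det\big((\lambda I-A^* )^{1,n}\big)=(-1)^{n-1}a_{n1}\det\big((\lambda I-A)^{1,1}\big)$; (3) $\det\big((\lambda I-A^* )^{n,1}\big)=(-1)^{n-1}a_{1n}\det\big((\lambda I-A)^{1,1}\big)$.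
   Context: A linear compartmental model $\mathcal M=(G,In,Out,Leak)$ consists of a finite directed graph $G=(V_G,E_G)$ without multi-edges, compartments $V_G=\{1,\dots,m\}$, and subsets $In,Out,Leak\subseteq V_G$; edge $j\to i$ carries parameter $a_{ij}$ and each $i\in Leak$ carries $a_{0i}$. The compartmental matrix $A$ has $A_{ii}=-\sum_{k:\,i\to k\in E_G}a_{ki}$ (minus $a_{0i}$ if $i\in Leak$), $A_{ij}=a_{ij}$ if $j\to i\in E_G$, $0$ otherwise. $B^{i,j}$ denotes $B$ with row $i$ and column $j$ removed; $\lambda$ is an indeterminate. Adding a leaf edge at $i$ to a graph with vertex set $\{1,\dots,n-1\}$ gives the graph with vertex set $\{1,\dots,n\}$ and edge set $E_G\cup\{i\to n,n\to i\}$. *)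

theory Defs
  imports "Jordan_Normal_Form.Determinant"
begin

text \<open>Compartments are 1..m; edge (j,i) in E means j -> i with parameter a i j;
leak parameter of compartment i is a 0 i. Matrix entry (i,j) (0-based) corresponds
to compartments i+1, j+1.\<close>

definition lin_comp_model :: "nat \<Rightarrow> (nat \<times> nat) set \<Rightarrow> nat set \<Rightarrow> nat set \<Rightarrow> nat set \<Rightarrow> bool" where
  "lin_comp_model m E In Out Leak \<longleftrightarrow>
     E \<subseteq> {1..m} \<times> {1..m} \<and> In \<subseteq> {1..m} \<and> Out \<subseteq> {1..m} \<and> Leak \<subseteq> {1..m}"

definition comp_matrix :: "nat \<Rightarrow> (nat \<times> nat) set \<Rightarrow> nat set \<Rightarrow> (nat \<Rightarrow> nat \<Rightarrow> 'a::comm_ring_1) \<Rightarrow> 'a mat" where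
  "comp_matrix m E Leak a = mat m m (\<lambda>(i,j).
     if i = j then - (\<Sum>k\<in>{k\<in>{1..m}. (i+1, k) \<in> E}. a k (i+1))
                   - (if i+1 \<in> Leak then a 0 (i+1) else 0)
     else if (j+1, i+1) \<in> E then a (i+1) (j+1) else 0)"

definition add_leaf_edge :: "(nat \<times> nat) set \<Rightarrow> nat \<Rightarrow> nat \<Rightarrow> (nat \<times> nat) set" where
  "add_leaf_edge E i n = E \<union> {(i, n), (n, i)}"

end

theory Submission
  imports Defs
begin

lemma det_rank1_00:
  fixes L :: "'a::comm_ring_1 mat"
  assumes L: "L \<in> carrier_mat m m" and m: "0 < m"
  shows "det (mat m m (\<lambda>(i,j). L$$(i,j) + (if i=0 \<and> j=0 then p else 0)))
        = det L + p * det (mat_delete L 0 0)"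
proof -
  define L' where "L' = mat m m (\<lambda>(i,j). L$$(i,j) + (if i=0 \<and> j=0 then p else 0))"
  have L': "L' \<in> carrier_mat m m" unfolding L'_def by auto
  have del: "mat_delete L' 0 j = mat_delete L 0 j" for j
    by (rule eq_matI, insert L, auto simp: mat_delete_def L'_def)
  have "det L' = (\<Sum>j<m. L'$$(0,j) * cofactor L' 0 j)"
    by (rule laplace_expansion_row[OF L' m])
  also have "\<dots> = (\<Sum>j<m. L$$(0,j) * cofactor L 0 j + (if j = 0 then p * cofactor L 0 0 else 0))"
    unfolding cofactor_def del by (rule sum.cong) (auto simp: L'_def algebra_simps)
  also have "\<dots> = det L + p * cofactor L 0 0"
    by (simp add: sum.distrib laplace_expansion_row[OF L m, symmetric] m)
  finally show ?thesis unfolding L'_def cofactor_def by simp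
qed

lemma leaf_det:
  fixes L Ls :: "'a::comm_ring_1 mat"
  assumes L: "L \<in> carrier_mat (Suc k) (Suc k)"
    and Ls: "Ls \<in> carrier_mat (Suc (Suc k)) (Suc (Suc k))"
    and TL: "\<And>i j. i < Suc k \<Longrightarrow> j < Suc k \<Longrightarrow> Ls$$(i,j) = L$$(i,j) + (if i=0 \<and> j=0 then p else 0)"
    and LR: "\<And>j. j < Suc k \<Longrightarrow> Ls$$(Suc k,j) = (if j=0 then -p else 0)"
    and LC: "\<And>i. i < Suc k \<Longrightarrow> Ls$$(i,Suc k) = (if i=0 then -q else 0)"
    and C: "Ls$$(Suc k,Suc k) = lam + q"
  shows "det Ls = lam * det L + q * det L + p * lam * det (mat_delete L 0 0) \<and>
         det (mat_delete Ls 0 (Suc k)) = (-1)^(Suc k) * p * det (mat_delete L 0 0) \<and>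
         det (mat_delete Ls (Suc k) 0) = (-1)^(Suc k) * q * det (mat_delete L 0 0)"
proof -
  let ?m = "Suc k"
  let ?D = "det (mat_delete L 0 0)"
  define N where "N = mat_delete Ls 0 ?m"
  define M where "M = mat_delete Ls ?m 0"
  have N: "N \<in> carrier_mat ?m ?m" and M: "M \<in> carrier_mat ?m ?m"
    using Ls by (auto simp: N_def M_def mat_delete_def)
  have dN: "mat_delete N k 0 = mat_delete L 0 0"
    by (rule eq_matI, insert L Ls, auto simp: mat_delete_def N_def TL)
  have dM: "mat_delete M 0 k = mat_delete L 0 0"
    by (rule eq_matI, insert L Ls, auto simp: mat_delete_def M_def TL)
  have "det N = (\<Sum>j<?m. N$$(k,j) * cofactor N k j)"
    by (rule laplace_expansion_row[OF N], simp)
  also have "\<dots> = (\<Sum>j<?m. if j = 0 then -p * cofactor N k 0 else 0)"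
    by (rule sum.cong, insert Ls, auto simp: N_def mat_delete_def LR)
  also have "\<dots> = -p * cofactor N k 0" by simp
  also have "\<dots> = (-1)^(Suc k) * p * ?D"
    by (simp add: cofactor_def dN)
  finally have DN: "det N = (-1)^(Suc k) * p * ?D" .
  have "det M = (\<Sum>i<?m. M$$(i,k) * cofactor M i k)"
    by (rule laplace_expansion_column[OF M], simp)
  also have "\<dots> = (\<Sum>i<?m. if i = 0 then -q * cofactor M 0 k else 0)"
    by (rule sum.cong, insert Ls, auto simp: M_def mat_delete_def LC)
  also have "\<dots> = -q * cofactor M 0 k" by simp
  also have "\<dots> = (-1)^(Suc k) * q * ?D"
    by (simp add: cofactor_def dM)
  finally have DM: "det M = (-1)^(Suc k) * q * ?D" .
  have dMM: "mat_delete Ls ?m ?m = mat ?m ?m (\<lambda>(i,j). L$$(i,j) + (if i=0 \<and> j=0 then p else 0))"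
    by (rule eq_matI, insert L Ls, auto simp: mat_delete_def TL)
  have "det Ls = (\<Sum>j<Suc ?m. Ls$$(?m,j) * cofactor Ls ?m j)"
    by (rule laplace_expansion_row[OF Ls], simp)
  also have "\<dots> = (\<Sum>j<?m. Ls$$(?m,j) * cofactor Ls ?m j) + (lam + q) * cofactor Ls ?m ?m"
    by (simp add: C)
  also have "(\<Sum>j<?m. Ls$$(?m,j) * cofactor Ls ?m j) = (\<Sum>j<?m. if j = 0 then -p * cofactor Ls ?m 0 else 0)"
    by (rule sum.cong, auto simp: LR)
  also have "\<dots> = -p * cofactor Ls ?m 0" by simp
  also have "cofactor Ls ?m 0 = (-1)^(Suc k) * det M" by (simp add: cofactor_def M_def)
  also have "cofactor Ls ?m ?m = det L + p * ?D"
    unfolding cofactor_def dMM by (simp add: det_rank1_00[OF L])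
  finally have "det Ls = - p * ((-1)^(Suc k) * ((-1)^(Suc k) * q * ?D)) + (lam + q) * (det L + p * ?D)"
    by (simp add: DM)
  also have "\<dots> = lam * det L + q * det L + p * lam * ?D"
    by (simp add: algebra_simps)
  finally show ?thesis using DN DM by (simp add: N_def M_def)
qed

lemma leaf_sum:
  assumes E: "E \<subseteq> {1..m} \<times> {1..m}" and i: "i < m"
  shows "(\<Sum>k\<in>{k\<in>{1..Suc m}. (i+1,k) \<in> E \<union> {(1,Suc m),(Suc m,1)}}. f k)
       = (\<Sum>k\<in>{k\<in>{1..m}. (i+1,k)\<in>E}. f k) + (if i=0 then f (Suc m) else 0)"
proof -
  have "{k\<in>{1..Suc m}. (i+1,k) \<in> E \<union> {(1,Suc m),(Suc m,1)}}
        = {k\<in>{1..m}. (i+1,k)\<in>E} \<union> (if i = 0 then {Suc m} else {})"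
    using E i by (auto simp: le_Suc_eq)
  moreover have "Suc m \<notin> {k\<in>{1..m}. (i+1,k)\<in>E}" by auto
  ultimately show ?thesis by (simp add: add.commute)
qed

lemma leaf_sum2:
  assumes E: "E \<subseteq> {1..m} \<times> {1..m}"
  shows "(\<Sum>k\<in>{k\<in>{1..Suc m}. (Suc m,k) \<in> E \<union> {(1,Suc m),(Suc m,1)}}. f k) = f 1"
proof -
  have "{k\<in>{1..Suc m}. (Suc m,k) \<in> E \<union> {(1,Suc m),(Suc m,1)}} = {1}"
    using E by auto
  then show ?thesis by simp
qed

theorem lemma4p13:
  fixes n :: nat and E :: "(nat \<times> nat) set" and In' Out' :: "nat set"
    and a :: "nat \<Rightarrow> nat \<Rightarrow> 'a::comm_ring_1" and lam :: 'a
  assumes "n \<ge> 3"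
    and "lin_comp_model (n-1) E {1} {1} {}"
    and "lin_comp_model n (add_leaf_edge E 1 n) In' Out' {}"
  defines "L \<equiv> lam \<cdot>\<^sub>m 1\<^sub>m (n-1) - comp_matrix (n-1) E {} a"
    and "Ls \<equiv> lam \<cdot>\<^sub>m 1\<^sub>m n - comp_matrix n (add_leaf_edge E 1 n) {} a"
  shows "det Ls = lam * det L + a 1 n * det L + a n 1 * lam * det (mat_delete L 0 0) \<and>
         det (mat_delete Ls 0 (n-1)) = (-1)^(n-1) * a n 1 * det (mat_delete L 0 0) \<and>
         det (mat_delete Ls (n-1) 0) = (-1)^(n-1) * a 1 n * det (mat_delete L 0 0)"
proof -
  obtain k where n: "n = Suc (Suc k)" using assms(1) by (metis Suc_le_D le_trans numeral_3_eq_3 le_SucE Suc_n_not_le_n eval_nat_numeral(3) not_less_eq_eq)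
  have E: "E \<subseteq> {1..Suc k} \<times> {1..Suc k}" using assms(2) n by (simp add: lin_comp_model_def)
  have LL: "L \<in> carrier_mat (Suc k) (Suc k)" unfolding L_def n comp_matrix_def by auto
  have LsC: "Ls \<in> carrier_mat (Suc (Suc k)) (Suc (Suc k))" unfolding Ls_def n comp_matrix_def by auto
  define m where "m = Suc k"
  define H where "H = E \<union> {(1,Suc m),(Suc m,1)}"
  have E': "E \<subseteq> {1..m} \<times> {1..m}" using E m_def by simp
  have Lseq: "Ls = lam \<cdot>\<^sub>m 1\<^sub>m (Suc m) - comp_matrix (Suc m) H {} a"
    by (simp add: Ls_def n add_leaf_edge_def H_def m_def)
  have Leq: "L = lam \<cdot>\<^sub>m 1\<^sub>m m - comp_matrix m E {} a"
    by (simp add: L_def n m_def)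
  have Lsij: "Ls$$(i,j) = (if i = j then lam + (\<Sum>k\<in>{k\<in>{1..Suc m}. (i+1, k) \<in> H}. a k (i+1))
      else if (j+1,i+1) \<in> H then - a (i+1) (j+1) else 0)" if "i < Suc m" "j < Suc m" for i j
    using that unfolding Lseq comp_matrix_def by auto
  have Lij: "L$$(i,j) = (if i = j then lam + (\<Sum>k\<in>{k\<in>{1..m}. (i+1, k) \<in> E}. a k (i+1))
      else if (j+1,i+1) \<in> E then - a (i+1) (j+1) else 0)" if "i < m" "j < m" for i j
    using that unfolding Leq comp_matrix_def by auto
  have "det Ls = lam * det L + a 1 (Suc m) * det L + a (Suc m) 1 * lam * det (mat_delete L 0 0) \<and>
         det (mat_delete Ls 0 m) = (-1)^m * a (Suc m) 1 * det (mat_delete L 0 0) \<and>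
         det (mat_delete Ls m 0) = (-1)^m * a 1 (Suc m) * det (mat_delete L 0 0)"
    unfolding m_def
  proof (rule leaf_det[OF LL LsC], goal_cases)
    case (1 i j)
    then have i: "i < m" and j: "j < m" by (auto simp: m_def)
    show ?case
    proof (cases "i = j")
      case True
      then show ?thesis using i j Lsij[of i j] Lij[of i j] leaf_sum[OF E' i, of "\<lambda>k. a k (i+1)"]
        by (simp add: H_def m_def algebra_simps)
    next
      case False
      have "(j+1,i+1) \<in> H \<longleftrightarrow> (j+1,i+1) \<in> E" using i j by (auto simp: H_def)
      then show ?thesis using i j False Lsij[of i j] Lij[of i j] by (auto simp: m_def)
    qed
  next
    case (2 j)
    then have j: "j < m" by (simp add: m_def)
    have "(j+1, Suc m) \<notin> H \<longleftrightarrow> j \<noteq> 0" using E' j by (auto simp: H_def)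
    then show ?case using j Lsij[of m j] by (auto simp: m_def)
  next
    case (3 i)
    then have i: "i < m" by (simp add: m_def)
    have "(Suc m, i+1) \<notin> H \<longleftrightarrow> i \<noteq> 0" using E' i by (auto simp: H_def)
    then show ?case using i Lsij[of i m] by (auto simp: m_def)
  next
    case 4
    show ?case using Lsij[of m m] leaf_sum2[OF E', of "\<lambda>k. a k (Suc m)"]
      by (simp add: H_def m_def)
  qed
  then show ?thesis by (simp add: n m_def)
qed

end
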